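(* Let $L\subseteq\Sigma^*$ be accepted by an end-decisive MM-QFA with bounded positive one-sided error and positive amplitude. Then there exists an end-decisive MM-QFA that accepts $\Sigma^*\setminus L$ with bounded error.
   Context: A measure-many quantum finite automaton (MM-QFA) over $\Sigma$ is a tuple $(Q,\Sigma,\{U_\sigma\}_{\sigma\in\Sigma\cup\{\$\}},q_0,Q_{acc},Q_{rej})$ with $Q$ finite indexing an orthonormal basis of $\mathbb{C}^Q$, end-marker $\$\notin\Sigma$, unitary $U_\sigma$, initial state $q_0$, and $Q$ partitioned into $Q_{acc},Q_{rej},Q_{non}$ with orthogonal projections $P_{acc},P_{rej},P_{non}$. On input $x$ it processes $x\$$ maintaining $(\psi,p_{acc},p_{rej})$, initially $(|q_0\rangle,0,0)$; on reading $\sigma$: $\psi'=U_\sigma\psi$, $p_{acc}\mathrel{+}=\|P_{acc}\psi'\|^2$, $p_{rej}\mathrel{+}=\|P_{rej}\psi'\|^2$, $\psi\leftarrow P_{non}\psi'$; the acceptance probability $p(x)$ is the final $p_{acc}$. It is end-decisive if $P_{acc}\psi'=0$ after reading every non-end-marker symbol, on every input. It accepts with positive amplitude if, on every input and at every step, the coordinates of $\psi'$ on the accepting basis states are non-negative reals. It accepts $L$ with bounded positive one-sided error if there is $c>0$ with $p(x)>c$ for $x\in L$ and $p(x)=0$ for $x\notin L$; it accepts a language $K$ with bounded error if for some $\lambda$ and $\epsilon>0$, $p(x)>\lambda+\epsilon$ for $x\in K$ and $p(x)<\lambda-\epsilon$ for $x\notin K$. *)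

theory Defs
  imports Complex_Main
begin

text \<open>States are the naturals 0..<nst (indexing the orthonormal
basis of C^Q). The input alphabet is the type 'a; the extended alphabet
Sigma + {end-marker} is 'a option, with None the end-marker.
Transition matrices: trans M s i j = <i| U_s |j>.\<close>

record 'a mmqfa =
  nst   :: nat
  trans :: "'a option \<Rightarrow> nat \<Rightarrow> nat \<Rightarrow> complex"
  init  :: nat
  acc   :: "nat set"
  rej   :: "nat set"

definition unitary_on :: "nat \<Rightarrow> (nat \<Rightarrow> nat \<Rightarrow> complex) \<Rightarrow> bool" where
  "unitary_on n U \<longleftrightarrow>
     (\<forall>i<n. \<forall>j<n. (\<Sum>k<n. cnj (U k i) * U k j) = (if i = j then 1 else 0))"

definition wf_mmqfa :: "'a mmqfa \<Rightarrow> bool" where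
  "wf_mmqfa M \<longleftrightarrow> init M < nst M \<and> acc M \<subseteq> {..<nst M} \<and> rej M \<subseteq> {..<nst M}
     \<and> acc M \<inter> rej M = {} \<and> (\<forall>s. unitary_on (nst M) (trans M s))"

definition non :: "'a mmqfa \<Rightarrow> nat set" where
  "non M = {..<nst M} - acc M - rej M"

definition apply_U :: "'a mmqfa \<Rightarrow> 'a option \<Rightarrow> (nat \<Rightarrow> complex) \<Rightarrow> (nat \<Rightarrow> complex)" where
  "apply_U M s \<psi> = (\<lambda>i. if i < nst M then (\<Sum>j<nst M. trans M s i j * \<psi> j) else 0)"

definition step :: "'a mmqfa \<Rightarrow> 'a option \<Rightarrow> (nat \<Rightarrow> complex) \<times> real \<times> real
                     \<Rightarrow> (nat \<Rightarrow> complex) \<times> real \<times> real" where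
  "step M s c = (case c of (\<psi>, pa, pr) \<Rightarrow>
      (let \<psi>' = apply_U M s \<psi> in
        ((\<lambda>i. if i \<in> non M then \<psi>' i else 0),
         pa + (\<Sum>i\<in>acc M. (cmod (\<psi>' i))\<^sup>2),
         pr + (\<Sum>i\<in>rej M. (cmod (\<psi>' i))\<^sup>2))))"

definition init_conf :: "'a mmqfa \<Rightarrow> (nat \<Rightarrow> complex) \<times> real \<times> real" where
  "init_conf M = ((\<lambda>i. if i = init M then 1 else 0), 0, 0)"

definition run :: "'a mmqfa \<Rightarrow> 'a option list \<Rightarrow> (nat \<Rightarrow> complex) \<times> real \<times> real" where
  "run M ws = fold (step M) ws (init_conf M)"

definition acc_prob :: "'a mmqfa \<Rightarrow> 'a list \<Rightarrow> real" where
  "acc_prob M x = fst (snd (run M (map Some x @ [None])))"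

definition state_after :: "'a mmqfa \<Rightarrow> 'a list \<Rightarrow> (nat \<Rightarrow> complex)" where
  "state_after M w = fst (run M (map Some w))"

definition end_decisive :: "'a mmqfa \<Rightarrow> bool" where
  "end_decisive M \<longleftrightarrow>
     (\<forall>w \<sigma>. \<forall>i\<in>acc M. apply_U M (Some \<sigma>) (state_after M w) i = 0)"

definition positive_amplitude :: "'a mmqfa \<Rightarrow> bool" where
  "positive_amplitude M \<longleftrightarrow>
     (\<forall>w s. \<forall>i\<in>acc M. Im (apply_U M s (state_after M w) i) = 0
                      \<and> Re (apply_U M s (state_after M w) i) \<ge> 0)"

definition accepts_pos_one_sided :: "'a mmqfa \<Rightarrow> 'a list set \<Rightarrow> bool" where
  "accepts_pos_one_sided M L \<longleftrightarrow>
     (\<exists>c>0. \<forall>x. (x \<in> L \<longrightarrow> acc_prob M x > c) \<and> (x \<notin> L \<longrightarrow> acc_prob M x = 0))"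

definition accepts_bounded :: "'a mmqfa \<Rightarrow> 'a list set \<Rightarrow> bool" where
  "accepts_bounded M K \<longleftrightarrow>
     (\<exists>t \<epsilon>. \<epsilon> > 0 \<and> (\<forall>x. (x \<in> K \<longrightarrow> acc_prob M x > t + \<epsilon>) \<and> (x \<notin> K \<longrightarrow> acc_prob M x < t - \<epsilon>)))"

end

theory Submission
  imports Defs
begin



definition mv :: "nat \<Rightarrow> (nat \<Rightarrow> nat \<Rightarrow> complex) \<Rightarrow> (nat \<Rightarrow> complex) \<Rightarrow> nat \<Rightarrow> complex" where
  "mv N A x = (\<lambda>i. if i < N then (\<Sum>j<N. A i j * x j) else 0)"

definition mm :: "nat \<Rightarrow> (nat \<Rightarrow> nat \<Rightarrow> complex) \<Rightarrow> (nat \<Rightarrow> nat \<Rightarrow> complex) \<Rightarrow> nat \<Rightarrow> nat \<Rightarrow> complex" where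
  "mm N A B = (\<lambda>i j. \<Sum>k<N. A i k * B k j)"

definition ip :: "nat \<Rightarrow> (nat \<Rightarrow> complex) \<Rightarrow> (nat \<Rightarrow> complex) \<Rightarrow> complex" where
  "ip N v x = (\<Sum>j<N. cnj (v j) * x j)"

definition hh :: "nat \<Rightarrow> (nat \<Rightarrow> complex) \<Rightarrow> nat \<Rightarrow> nat \<Rightarrow> complex" where
  "hh N v = (\<lambda>i j. (if i = j then 1 else 0) - 2 * v i * cnj (v j))"

lemma mv_mm: "mv N (mm N A B) x = mv N A (mv N B x)"
proof
  fix i
  show "mv N (mm N A B) x i = mv N A (mv N B x) i"
  proof (cases "i < N")
    case True
    have "(\<Sum>j<N. (\<Sum>k<N. A i k * B k j) * x j) = (\<Sum>j<N. \<Sum>k<N. A i k * (B k j * x j))"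
      by (simp add: sum_distrib_right mult.assoc)
    also have "\<dots> = (\<Sum>k<N. \<Sum>j<N. A i k * (B k j * x j))" by (rule sum.swap)
    also have "\<dots> = (\<Sum>k<N. A i k * (\<Sum>j<N. B k j * x j))" by (simp add: sum_distrib_left)
    finally show ?thesis using True by (simp add: mv_def mm_def)
  qed (simp add: mv_def)
qed

lemma mv_hh: "mv N (hh N v) x i = (if i < N then x i - 2 * v i * ip N v x else 0)"
proof (cases "i < N")
  case True
  have "(\<Sum>j<N. ((if i = j then 1 else 0) - 2 * v i * cnj (v j)) * x j)
     = (\<Sum>j<N. (if i = j then x j else 0) - 2 * v i * (cnj (v j) * x j))"
    by (rule sum.cong) (auto simp: algebra_simps)
  also have "\<dots> = (\<Sum>j<N. (if i = j then x j else 0)) - (\<Sum>j<N. 2 * v i * (cnj (v j) * x j))"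
    by (rule sum_subtractf)
  also have "\<dots> = x i - 2 * v i * ip N v x" using True
    by (simp add: ip_def sum_distrib_left)
  finally show ?thesis using True by (simp add: mv_def hh_def)
qed (simp add: mv_def)

lemma ip_hh: "ip N v (mv N (hh N v) x) = ip N v x - 2 * ip N v v * ip N v x"
proof -
  have "ip N v (mv N (hh N v) x) = (\<Sum>j<N. cnj (v j) * mv N (hh N v) x j)"
    by (simp add: ip_def)
  also have "\<dots> = (\<Sum>j<N. cnj (v j) * x j - (cnj (v j) * v j) * (2 * ip N v x))"
    by (rule sum.cong) (auto simp: mv_hh right_diff_distrib mult_ac)
  also have "\<dots> = (\<Sum>j<N. cnj (v j) * x j) - (\<Sum>j<N. cnj (v j) * v j) * (2 * ip N v x)"
    by (simp add: sum_subtractf sum_distrib_right)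
  also have "\<dots> = ip N v x - 2 * ip N v v * ip N v x"
    by (simp add: ip_def)
  finally show ?thesis .
qed

lemma hh_invol:
  assumes "ip N v v = 1" "\<And>i. i \<ge> N \<Longrightarrow> x i = 0"
  shows "mv N (hh N v) (mv N (hh N v) x) = x"
proof
  fix i
  show "mv N (hh N v) (mv N (hh N v) x) i = x i"
    using assms by (cases "i < N") (auto simp: mv_hh ip_hh)
qed

lemma unitary_mm:
  assumes "unitary_on N A" "unitary_on N B"
  shows "unitary_on N (mm N A B)"
  unfolding unitary_on_def
proof (intro allI impI)
  fix i j assume ij: "i < N" "j < N"
  have "(\<Sum>k<N. cnj (mm N A B k i) * mm N A B k j)
      = (\<Sum>k<N. \<Sum>l<N. \<Sum>m<N. cnj (B l i) * B m j * (cnj (A k l) * A k m))"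
    unfolding mm_def
    by (simp add: sum_distrib_left sum_distrib_right algebra_simps)
  also have "\<dots> = (\<Sum>l<N. \<Sum>k<N. \<Sum>m<N. cnj (B l i) * B m j * (cnj (A k l) * A k m))"
    by (rule sum.swap)
  also have "\<dots> = (\<Sum>l<N. \<Sum>m<N. \<Sum>k<N. cnj (B l i) * B m j * (cnj (A k l) * A k m))"
  proof (rule sum.cong[OF refl])
    fix l
    show "(\<Sum>k<N. \<Sum>m<N. cnj (B l i) * B m j * (cnj (A k l) * A k m)) = (\<Sum>m<N. \<Sum>k<N. cnj (B l i) * B m j * (cnj (A k l) * A k m))"
      by (rule sum.swap)
  qed
  also have "\<dots> = (\<Sum>l<N. \<Sum>m<N. cnj (B l i) * B m j * (if l = m then 1 else 0))"
    using assms(1) unfolding unitary_on_def by (simp add: sum_distrib_left[symmetric])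
  also have "\<dots> = (\<Sum>l<N. cnj (B l i) * B l j)"
    by (simp add: if_distrib cong: if_cong)
  also have "\<dots> = (if i = j then 1 else 0)" using assms(2) ij unfolding unitary_on_def by simp
  finally show "(\<Sum>k<N. cnj (mm N A B k i) * mm N A B k j) = (if i = j then 1 else 0)" .
qed

lemma unitary_hh:
  assumes "ip N v v = 1"
  shows "unitary_on N (hh N v)"
  unfolding unitary_on_def
proof (intro allI impI)
  fix i j assume ij: "i < N" "j < N"
  have "(\<Sum>k<N. cnj (hh N v k i) * hh N v k j) = 
     (\<Sum>k<N. (if k = i then hh N v k j else 0) - 2 * v i * (cnj (v k) * hh N v k j))"
    by (rule sum.cong) (auto simp: hh_def algebra_simps)
  also have "\<dots> = (\<Sum>k<N. (if k = i then hh N v k j else 0)) - (\<Sum>k<N. 2 * v i * (cnj (v k) * hh N v k j))"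
    by (rule sum_subtractf)
  also have "(\<Sum>k<N. 2 * v i * (cnj (v k) * hh N v k j)) = 2 * v i * (\<Sum>k<N. cnj (v k) * hh N v k j)"
    by (simp add: sum_distrib_left)
  also have "(\<Sum>k<N. cnj (v k) * hh N v k j) = (\<Sum>k<N. (if k = j then cnj (v k) else 0) - (cnj (v k) * v k) * (2 * cnj (v j)))"
    unfolding hh_def by (rule sum.cong) (auto simp: algebra_simps)
  also have "\<dots> = (\<Sum>k<N. (if k = j then cnj (v k) else 0)) - (\<Sum>k<N. cnj (v k) * v k) * (2 * cnj (v j))"
    by (simp add: sum_subtractf sum_distrib_right)
  also have "\<dots> = - cnj (v j)" using ij assms by (simp add: ip_def)
  finally show "(\<Sum>k<N. cnj (hh N v k i) * hh N v k j) = (if i = j then 1 else 0)"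
    using ij by (simp add: hh_def algebra_simps)
qed

definition ext :: "nat \<Rightarrow> (nat \<Rightarrow> nat \<Rightarrow> complex) \<Rightarrow> nat \<Rightarrow> nat \<Rightarrow> complex" where
  "ext n U = (\<lambda>i j. if i < n \<and> j < n then U i j else if i = j then 1 else 0)"

lemma unitary_ext:
  assumes "unitary_on n U" "n \<le> N"
  shows "unitary_on N (ext n U)"
  unfolding unitary_on_def
proof (intro allI impI)
  fix i j assume ij: "i < N" "j < N"
  have split: "{..<N} = {..<n} \<union> {n..<N}" using assms(2) by auto
  have "(\<Sum>k<N. cnj (ext n U k i) * ext n U k j) =
      (\<Sum>k<n. cnj (ext n U k i) * ext n U k j) + (\<Sum>k\<in>{n..<N}. cnj (ext n U k i) * ext n U k j)"
    unfolding split by (rule sum.union_disjoint) auto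
  also have "\<dots> = (if i = j then 1 else 0)"
  proof (cases "i < n"; cases "j < n")
    assume "i < n" "j < n"
    then show ?thesis using assms(1) unfolding unitary_on_def
      by (simp add: ext_def)
  next
    assume "i < n" "\<not> j < n"
    then show ?thesis by (auto simp: ext_def intro!: sum.neutral)
  next
    assume "\<not> i < n" "j < n"
    then show ?thesis by (auto simp: ext_def intro!: sum.neutral)
  next
    assume a: "\<not> i < n" "\<not> j < n"
    have z: "(\<Sum>k<n. cnj (ext n U k i) * ext n U k j) = 0"
      using a by (auto simp: ext_def intro!: sum.neutral)
    have "(\<Sum>k\<in>{n..<N}. cnj (ext n U k i) * ext n U k j) = (\<Sum>k\<in>{n..<N}. if k = i \<and> k = j then 1 else 0)"
      using a by (intro sum.cong) (auto simp: ext_def)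
    moreover have "(\<Sum>k\<in>{n..<N}. if k = i \<and> k = j then 1 else 0) = (if i = j then (1::complex) else 0)"
      using a ij by (cases "i = j") (auto intro: sum.neutral)
    ultimately have "(\<Sum>k\<in>{n..<N}. cnj (ext n U k i) * ext n U k j) = (if i = j then 1 else 0)" by simp
    then show ?thesis using z by simp
  qed
  finally show "(\<Sum>k<N. cnj (ext n U k i) * ext n U k j) = (if i = j then 1 else 0)" .
qed

lemma unitary_perm:
  assumes "unitary_on N A" "\<And>i. i < N \<Longrightarrow> p i < N" "inj_on p {..<N}"
  shows "unitary_on N (\<lambda>i j. A i (p j))"
  using assms unfolding unitary_on_def inj_on_def by auto

lemma cnj_mult_self: "cnj z * z = (complex_of_real (cmod z))\<^sup>2"
  by (metis complex_norm_square mult.commute of_real_power)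

lemma unitary_norm:
  assumes "unitary_on N A"
  shows "(\<Sum>i<N. (cmod (mv N A x i))\<^sup>2) = (\<Sum>j<N. (cmod (x j))\<^sup>2)"
proof -
  have "complex_of_real (\<Sum>i<N. (cmod (mv N A x i))\<^sup>2) = (\<Sum>i<N. cnj (mv N A x i) * mv N A x i)"
    by (simp add: cnj_mult_self)
  also have "\<dots> = (\<Sum>i<N. \<Sum>j<N. \<Sum>l<N. cnj (x j) * x l * (cnj (A i j) * A i l))"
    by (simp add: mv_def sum_distrib_left sum_distrib_right algebra_simps)
  also have "\<dots> = (\<Sum>j<N. \<Sum>i<N. \<Sum>l<N. cnj (x j) * x l * (cnj (A i j) * A i l))"
    by (rule sum.swap)
  also have "\<dots> = (\<Sum>j<N. \<Sum>l<N. \<Sum>i<N. cnj (x j) * x l * (cnj (A i j) * A i l))"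
  proof (rule sum.cong[OF refl])
    fix j
    show "(\<Sum>i<N. \<Sum>l<N. cnj (x j) * x l * (cnj (A i j) * A i l)) = (\<Sum>l<N. \<Sum>i<N. cnj (x j) * x l * (cnj (A i j) * A i l))"
      by (rule sum.swap)
  qed
  also have "\<dots> = (\<Sum>j<N. \<Sum>l<N. cnj (x j) * x l * (if j = l then 1 else 0))"
    using assms unfolding unitary_on_def by (simp add: sum_distrib_left[symmetric])
  also have "\<dots> = (\<Sum>j<N. cnj (x j) * x j)"
    by (simp add: if_distrib cong: if_cong)
  also have "\<dots> = complex_of_real (\<Sum>j<N. (cmod (x j))\<^sup>2)"
    by (simp add: cnj_mult_self)
  finally show ?thesis using of_real_eq_iff by blast
qed




definition sw :: "nat \<Rightarrow> nat \<Rightarrow> nat \<Rightarrow> nat" where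
  "sw a b i = (if i = a then b else if i = b then a else i)"

definition ev :: "nat \<Rightarrow> nat \<Rightarrow> complex" where
  "ev k = (\<lambda>i. if i = k then 1 else 0)"

definition cc :: "'a mmqfa \<Rightarrow> nat" where
  "cc M = (if init M \<in> non M then init M else nst M)"

definition pp :: "'a mmqfa \<Rightarrow> nat \<Rightarrow> nat" where
  "pp M = (if init M \<in> non M then id else sw (init M) (nst M))"

definition VV :: "'a mmqfa \<Rightarrow> 'a option \<Rightarrow> nat \<Rightarrow> nat \<Rightarrow> complex" where
  "VV M s = (\<lambda>i j. ext (nst M) (trans M s) i (pp M j))"

definition wv :: "'a mmqfa \<Rightarrow> nat \<Rightarrow> complex" where
  "wv M = (\<lambda>i. if i = cc M then 3/5 else if i = nst M + 1 then -4/5 else 0)"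

definition uu :: "'a mmqfa \<Rightarrow> nat \<Rightarrow> complex" where
  "uu M = (if acc M = {} then ev (nst M)
           else (\<lambda>i. if i \<in> acc M then complex_of_real (1 / sqrt (real (card (acc M)))) else 0))"

definition vv :: "'a mmqfa \<Rightarrow> nat \<Rightarrow> complex" where
  "vv M = (\<lambda>i. 2/3 * ev (nst M + 1) i - 2/3 * uu M i + 1/3 * ev (nst M + 2) i)"

definition MM :: "'a mmqfa \<Rightarrow> 'a mmqfa" where
  "MM M = \<lparr>nst = nst M + 3,
      trans = (\<lambda>s. case s of
          Some _ \<Rightarrow> mm (nst M + 3) (hh (nst M + 3) (wv M)) (mm (nst M + 3) (VV M s) (hh (nst M + 3) (wv M)))
        | None \<Rightarrow> mm (nst M + 3) (hh (nst M + 3) (vv M)) (mm (nst M + 3) (VV M s) (hh (nst M + 3) (wv M)))),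
      init = cc M, acc = {nst M + 2}, rej = acc M \<union> rej M\<rparr>"

lemma run_snoc: "run M (ws @ [s]) = step M s (run M ws)"
  by (simp add: run_def)

lemma state_after_Nil: "state_after M [] = ev (init M)"
  by (simp add: state_after_def run_def init_conf_def ev_def)

lemma state_after_snoc:
  "state_after M (w @ [\<sigma>]) = (\<lambda>i. if i \<in> non M then apply_U M (Some \<sigma>) (state_after M w) i else 0)"
proof -
  obtain a b c where r: "run M (map Some w) = (a, b, c)" by (cases "run M (map Some w)")
  have sa: "state_after M w = a" using r by (simp add: state_after_def)
  have "state_after M (w @ [\<sigma>]) = fst (step M (Some \<sigma>) (a, b, c))"
    by (simp add: state_after_def run_snoc r)
  then show ?thesis unfolding sa by (simp add: step_def Let_def)
qed

lemma apply_U_mv: "apply_U M s \<psi> = mv (nst M) (trans M s) \<psi>"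
  by (simp add: apply_U_def mv_def)

lemma sum_two:
  assumes "a < (N::nat)" "b < N" "a \<noteq> b" "\<And>j. j < N \<Longrightarrow> j \<noteq> a \<Longrightarrow> j \<noteq> b \<Longrightarrow> f j = 0"
  shows "(\<Sum>j<N. f j) = f a + (f b :: complex)"
proof -
  have "(\<Sum>j<N. f j) = (\<Sum>j\<in>{a, b}. f j)"
    by (rule sum.mono_neutral_right) (use assms in auto)
  then show ?thesis using assms by simp
qed

definition yv :: "'a mmqfa \<Rightarrow> 'a list \<Rightarrow> nat \<Rightarrow> complex" where
  "yv M' w = (\<lambda>i. 7/25 * (if w = [] then ev (cc M') i else state_after M' w i) + 24/25 * ev (nst M' + 1) i)"

definition zv :: "'a mmqfa \<Rightarrow> 'a option \<Rightarrow> 'a list \<Rightarrow> nat \<Rightarrow> complex" where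
  "zv M' s w = (\<lambda>i. 7/25 * apply_U M' s (state_after M' w) i + 24/25 * ev (nst M' + 1) i)"

context
  fixes M :: "'a mmqfa"
  assumes wf: "wf_mmqfa M"
begin

lemma init_lt: "init M < nst M" using wf by (simp add: wf_mmqfa_def)
lemma acc_sub: "acc M \<subseteq> {..<nst M}" using wf by (simp add: wf_mmqfa_def)
lemma rej_sub: "rej M \<subseteq> {..<nst M}" using wf by (simp add: wf_mmqfa_def)
lemma unit_M: "unitary_on (nst M) (trans M s)" using wf by (simp add: wf_mmqfa_def)

lemma non_MM: "non (MM M) = non M \<union> {nst M, nst M + 1}"
  using acc_sub rej_sub by (auto simp: non_def MM_def)

lemma cc_lt: "cc M < nst M + 1" using init_lt by (simp add: cc_def)
lemma cc_non: "cc M \<in> non (MM M)" using init_lt by (auto simp: cc_def non_MM)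

lemma state_after_ge: "i \<ge> nst M \<Longrightarrow> state_after M w i = 0"
  using init_lt by (induction w rule: rev_induct) (auto simp: state_after_Nil state_after_snoc ev_def non_def apply_U_def)
  
lemma state_after_nonM: "w \<noteq> [] \<Longrightarrow> i \<notin> non M \<Longrightarrow> state_after M w i = 0"
  by (induction w rule: rev_induct) (auto simp: state_after_snoc)

lemma ip_wv: "ip (nst M + 3) (wv M) (wv M) = 1"
proof -
  have "ip (nst M + 3) (wv M) (wv M) = cnj (wv M (cc M)) * wv M (cc M) + cnj (wv M (nst M + 1)) * wv M (nst M + 1)"
    unfolding ip_def using cc_lt by (intro sum_two) (auto simp: wv_def)
  then show ?thesis using cc_lt by (simp add: wv_def)
qed


lemma uu_ge: "j \<ge> nst M + 1 \<Longrightarrow> uu M j = 0"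
  using acc_sub by (auto simp: uu_def ev_def)

lemma uu_real: "cnj (uu M j) = uu M j"
  by (simp add: uu_def ev_def)

lemma ip_uu: "ip (nst M + 1) (uu M) (uu M) = 1"
proof (cases "acc M = {}")
  case True
  then show ?thesis by (simp add: ip_def uu_def ev_def)
next
  case False
  define k where "k = card (acc M)"
  have fin: "finite (acc M)" using acc_sub finite_subset by blast
  have kpos: "k > 0" using False fin by (simp add: k_def card_gt_0_iff)
  have "ip (nst M + 1) (uu M) (uu M) = (\<Sum>j<nst M + 1. if j \<in> acc M then complex_of_real (1 / real k) else 0)"
    unfolding ip_def using False kpos
    by (intro sum.cong) (auto simp: uu_def k_def simp flip: of_real_mult)
  also have "\<dots> = (\<Sum>j\<in>acc M. complex_of_real (1 / real k))"
    by (rule sum.mono_neutral_cong_right) (use acc_sub in auto)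
  finally show ?thesis using kpos by (simp add: k_def)
qed

lemma ip_vv: "ip (nst M + 3) (vv M) (vv M) = 1"
proof -
  let ?n = "nst M"
  have split: "{..<?n + 3} = {..<?n + 1} \<union> {?n + 1, ?n + 2}" by auto
  have "ip (?n + 3) (vv M) (vv M) = (\<Sum>j<?n + 1. cnj (vv M j) * vv M j) + (\<Sum>j\<in>{?n + 1, ?n + 2}. cnj (vv M j) * vv M j)"
    unfolding ip_def split by (rule sum.union_disjoint) auto
  also have "(\<Sum>j<?n + 1. cnj (vv M j) * vv M j) = (\<Sum>j<?n + 1. 4/9 * (cnj (uu M j) * uu M j))"
    by (intro sum.cong) (auto simp: vv_def ev_def uu_real)
  also have "\<dots> = 4/9 * ip (?n + 1) (uu M) (uu M)" by (simp only: ip_def sum_distrib_left)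
  also have "\<dots> = 4/9" using ip_uu by simp
  also have "(\<Sum>j\<in>{?n + 1, ?n + 2}. cnj (vv M j) * vv M j) = 5/9"
    by (simp add: vv_def ev_def uu_ge)
  finally show ?thesis by simp
qed

lemma pp_invol: "pp M (pp M j) = j"
  by (simp add: pp_def sw_def)

lemma pp_lt: "j < nst M + 3 \<Longrightarrow> pp M j < nst M + 3"
  using init_lt by (simp add: pp_def sw_def)

lemma yv_pp: "yv M w (pp M j) = 7/25 * state_after M w j + 24/25 * ev (nst M + 1) j"
proof (cases "init M \<in> non M")
  case True
  then show ?thesis by (simp add: yv_def pp_def cc_def state_after_Nil)
next
  case False
  have ev1: "ev (nst M + 1) (sw (init M) (nst M) j) = ev (nst M + 1) j"
    using init_lt by (auto simp: ev_def sw_def)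
  show ?thesis
  proof (cases "w = []")
    case True
    then show ?thesis using False init_lt ev1
      by (auto simp: yv_def pp_def cc_def state_after_Nil ev_def sw_def)
  next
    case ne: False
    have "state_after M w (sw (init M) (nst M) j) = state_after M w j"
      using state_after_nonM[OF ne, of "init M"] state_after_ge[of "nst M" w] False
      by (auto simp: sw_def)
    then show ?thesis using ne False ev1 by (simp add: yv_def pp_def)
  qed
qed

lemma mv_ext:
  assumes "n + 1 < N" "\<And>j. j \<ge> n \<Longrightarrow> \<psi> j = 0"
  shows "mv N (ext n U) (\<lambda>j. a * \<psi> j + b * ev (n + 1) j) = (\<lambda>i. a * mv n U \<psi> i + b * ev (n + 1) i)"
proof
  fix i
  show "mv N (ext n U) (\<lambda>j. a * \<psi> j + b * ev (n + 1) j) i = a * mv n U \<psi> i + b * ev (n + 1) i"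
  proof (cases "i < n")
    case True
    have split: "{..<N} = {..<n} \<union> {n..<N}" using assms(1) by auto
    have "(\<Sum>j<N. ext n U i j * (a * \<psi> j + b * ev (n + 1) j)) =
       (\<Sum>j<n. ext n U i j * (a * \<psi> j + b * ev (n + 1) j)) + (\<Sum>j\<in>{n..<N}. ext n U i j * (a * \<psi> j + b * ev (n + 1) j))"
      unfolding split by (rule sum.union_disjoint) auto
    also have "(\<Sum>j\<in>{n..<N}. ext n U i j * (a * \<psi> j + b * ev (n + 1) j)) = 0"
      using True by (intro sum.neutral) (auto simp: ext_def)
    also have "(\<Sum>j<n. ext n U i j * (a * \<psi> j + b * ev (n + 1) j)) = a * (\<Sum>j<n. U i j * \<psi> j)"
      using True by (simp add: sum_distrib_left ext_def ev_def algebra_simps)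
    finally show ?thesis using True assms(1) by (simp add: mv_def ev_def)
  next
    case False
    show ?thesis
    proof (cases "i < N")
      case True
      have "(\<Sum>j<N. ext n U i j * (a * \<psi> j + b * ev (n + 1) j)) = (\<Sum>j<N. if j = i then a * \<psi> j + b * ev (n + 1) j else 0)"
        using False by (intro sum.cong) (auto simp: ext_def)
      also have "\<dots> = a * \<psi> i + b * ev (n + 1) i" using True by simp
      finally show ?thesis using True False assms(2)[of i] by (simp add: mv_def)
    next
      case F2: False
      then show ?thesis using False assms(1) by (simp add: mv_def ev_def)
    qed
  qed
qed

lemma mv_VV: "mv (nst M + 3) (VV M s) (yv M w) = zv M s w"
proof -
  let ?N = "nst M + 3"
  have "mv ?N (VV M s) (yv M w) = mv ?N (ext (nst M) (trans M s)) (\<lambda>j. yv M w (pp M j))"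
  proof
    fix i
    have "(\<Sum>j<?N. ext (nst M) (trans M s) i (pp M j) * yv M w j)
        = (\<Sum>j<?N. ext (nst M) (trans M s) i j * yv M w (pp M j))"
      by (rule sum.reindex_bij_witness[of _ "pp M" "pp M"]) (auto simp: pp_invol pp_lt)
    then show "mv ?N (VV M s) (yv M w) i = mv ?N (ext (nst M) (trans M s)) (\<lambda>j. yv M w (pp M j)) i"
      by (simp add: mv_def VV_def)
  qed
  also have "\<dots> = mv ?N (ext (nst M) (trans M s)) (\<lambda>j. 7/25 * state_after M w j + 24/25 * ev (nst M + 1) j)"
    by (simp add: yv_pp)
  also have "\<dots> = zv M s w"
  proof -
    have "mv ?N (ext (nst M) (trans M s)) (\<lambda>j. 7/25 * state_after M w j + 24/25 * ev (nst M + 1) j)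
       = (\<lambda>i. 7/25 * mv (nst M) (trans M s) (state_after M w) i + 24/25 * ev (nst M + 1) i)"
      by (rule mv_ext) (simp_all add: state_after_ge)
    then show ?thesis by (simp add: zv_def apply_U_mv)
  qed
  finally show ?thesis .
qed

end



lemma apply_ge: "i \<ge> nst M \<Longrightarrow> apply_U M s \<psi> i = 0"
  by (simp add: apply_U_def)

definition sig :: "'a mmqfa \<Rightarrow> 'a list \<Rightarrow> complex" where
  "sig M x = (\<Sum>j<nst M + 3. uu M j * apply_U M None (state_after M x) j)"

context
  fixes M :: "'a mmqfa"
  assumes wf: "wf_mmqfa M"
begin

lemma nst_MM: "nst (MM M) = nst M + 3" by (simp add: MM_def)
lemma acc_MM: "acc (MM M) = {nst M + 2}" by (simp add: MM_def)

lemma wv_non: "wv M j \<noteq> 0 \<Longrightarrow> j \<in> non (MM M)"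
  using cc_non[OF wf] by (auto simp: wv_def non_MM[OF wf] split: if_splits)

lemma wv_out: "j \<notin> non (MM M) \<Longrightarrow> wv M j = 0"
  using wv_non by blast

lemma comm:
  "(\<lambda>i. if i \<in> non (MM M) then mv (nst M + 3) (hh (nst M + 3) (wv M)) z i else 0)
   = mv (nst M + 3) (hh (nst M + 3) (wv M)) (\<lambda>i. if i \<in> non (MM M) then z i else 0)"
proof -
  have ipeq: "ip (nst M + 3) (wv M) (\<lambda>i. if i \<in> non (MM M) then z i else 0) = ip (nst M + 3) (wv M) z"
    unfolding ip_def by (intro sum.cong refl) (auto simp: wv_out)
  show ?thesis
  proof
    fix i
    show "(if i \<in> non (MM M) then mv (nst M + 3) (hh (nst M + 3) (wv M)) z i else 0)
       = mv (nst M + 3) (hh (nst M + 3) (wv M)) (\<lambda>i. if i \<in> non (MM M) then z i else 0) i"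
      by (simp add: mv_hh ipeq wv_out)
  qed
qed

lemma yv_supp: "i \<ge> nst M + 3 \<Longrightarrow> yv M w i = 0"
  using cc_lt[OF wf] state_after_ge[OF wf, of i w] by (simp add: yv_def ev_def)

lemma Qinv: "mv (nst M + 3) (hh (nst M + 3) (wv M)) (mv (nst M + 3) (hh (nst M + 3) (wv M)) (yv M w)) = yv M w"
  by (rule hh_invol[OF ip_wv[OF wf]]) (simp add: yv_supp)

lemma apply_MM_Some:
  "apply_U (MM M) (Some \<sigma>) (mv (nst M + 3) (hh (nst M + 3) (wv M)) (yv M w))
   = mv (nst M + 3) (hh (nst M + 3) (wv M)) (zv M (Some \<sigma>) w)"
  unfolding apply_U_mv nst_MM
  by (simp add: MM_def mv_mm Qinv mv_VV[OF wf])

lemma apply_MM_None: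
  "apply_U (MM M) None (mv (nst M + 3) (hh (nst M + 3) (wv M)) (yv M w))
   = mv (nst M + 3) (hh (nst M + 3) (vv M)) (zv M None w)"
  unfolding apply_U_mv nst_MM
  by (simp add: MM_def mv_mm Qinv mv_VV[OF wf])

lemma cc_ne: "cc M \<noteq> nst M + 1" "cc M \<noteq> nst M + 2"
  using cc_lt[OF wf] by auto

lemma zQ: "mv (nst M + 3) (hh (nst M + 3) (wv M)) (zv M s w) (nst M + 2) = 0"
  using cc_ne by (simp add: mv_hh wv_def zv_def ev_def apply_ge)

lemma Pz: "(\<lambda>i. if i \<in> non (MM M) then zv M (Some \<sigma>) w i else 0) = yv M (w @ [\<sigma>])"
proof
  fix i
  have nl: "i \<in> non M \<Longrightarrow> i < nst M" by (simp add: non_def)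
  show "(if i \<in> non (MM M) then zv M (Some \<sigma>) w i else 0) = yv M (w @ [\<sigma>]) i"
    using nl by (auto simp: zv_def yv_def non_MM[OF wf] state_after_snoc ev_def apply_ge)
qed

lemma yv_Nil: "mv (nst M + 3) (hh (nst M + 3) (wv M)) (yv M []) = ev (cc M)"
proof -
  have ip: "ip (nst M + 3) (wv M) (yv M []) = -3/5"
  proof -
    have "ip (nst M + 3) (wv M) (yv M []) = cnj (wv M (cc M)) * yv M [] (cc M) + cnj (wv M (nst M + 1)) * yv M [] (nst M + 1)"
      unfolding ip_def using cc_lt[OF wf] cc_ne by (intro sum_two) (auto simp: wv_def)
    then show ?thesis using cc_ne by (simp add: wv_def yv_def ev_def)
  qed
  show ?thesis
  proof
    fix i
    show "mv (nst M + 3) (hh (nst M + 3) (wv M)) (yv M []) i = ev (cc M) i"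
      unfolding mv_hh ip using cc_lt[OF wf] cc_ne by (auto simp: wv_def yv_def ev_def)
  qed
qed

lemma run_MM:
  "state_after (MM M) w = mv (nst M + 3) (hh (nst M + 3) (wv M)) (yv M w) \<and> fst (snd (run (MM M) (map Some w))) = 0"
proof (induction w rule: rev_induct)
  case Nil
  then show ?case using yv_Nil
    by (simp add: state_after_Nil run_def init_conf_def) (simp add: MM_def)
next
  case (snoc \<sigma> w)
  obtain x pa pr where r: "run (MM M) (map Some w) = (x, pa, pr)" by (cases "run (MM M) (map Some w)")
  have x: "x = mv (nst M + 3) (hh (nst M + 3) (wv M)) (yv M w)" and pa: "pa = 0"
    using snoc r by (simp_all add: state_after_def)
  have r2: "run (MM M) (map Some (w @ [\<sigma>])) = step (MM M) (Some \<sigma>) (x, pa, pr)"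
    by (simp add: run_snoc r)
  have ap: "apply_U (MM M) (Some \<sigma>) x = mv (nst M + 3) (hh (nst M + 3) (wv M)) (zv M (Some \<sigma>) w)"
    unfolding x by (rule apply_MM_Some)
  have "state_after (MM M) (w @ [\<sigma>]) = (\<lambda>i. if i \<in> non (MM M) then apply_U (MM M) (Some \<sigma>) x i else 0)"
    by (simp only: state_after_def r2) (simp add: step_def Let_def)
  also have "\<dots> = mv (nst M + 3) (hh (nst M + 3) (wv M)) (yv M (w @ [\<sigma>]))"
    unfolding ap comm Pz ..
  finally have A: "state_after (MM M) (w @ [\<sigma>]) = mv (nst M + 3) (hh (nst M + 3) (wv M)) (yv M (w @ [\<sigma>]))" .
  have B: "fst (snd (run (MM M) (map Some (w @ [\<sigma>])))) = 0"
    using zQ unfolding r2 by (simp add: step_def Let_def ap pa acc_MM)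
  show ?case using A B by simp
qed

lemma end_dec_MM: "end_decisive (MM M)"
  unfolding end_decisive_def
proof (intro allI ballI)
  fix w \<sigma> i assume "i \<in> acc (MM M)"
  then have "i = nst M + 2" by (simp add: MM_def)
  then show "apply_U (MM M) (Some \<sigma>) (state_after (MM M) w) i = 0"
    using run_MM[of w] apply_MM_Some zQ by simp
qed

lemma vvz: "cnj (vv M j) * zv M None x j = 16/25 * ev (nst M + 1) j - 14/75 * (uu M j * apply_U M None (state_after M x) j)"
proof (cases "j = nst M + 1")
  case True
  then show ?thesis by (simp add: vv_def zv_def ev_def uu_ge[OF wf] apply_ge)
next
  case F1: False
  show ?thesis
  proof (cases "j = nst M + 2")
    case True
    then show ?thesis by (simp add: vv_def zv_def ev_def uu_ge[OF wf] apply_ge)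
  next
    case False
    then show ?thesis using F1 by (simp add: vv_def zv_def ev_def uu_real[OF wf])
  qed
qed

lemma accMM: "acc_prob (MM M) x = (cmod (2/3 * (16/25 - 14/75 * sig M x)))\<^sup>2"
proof -
  obtain y pa pr where r: "run (MM M) (map Some x) = (y, pa, pr)" by (cases "run (MM M) (map Some x)")
  have y: "y = mv (nst M + 3) (hh (nst M + 3) (wv M)) (yv M x)" and pa: "pa = 0"
    using run_MM[of x] r by (simp_all add: state_after_def)
  have ipv: "ip (nst M + 3) (vv M) (zv M None x) = 16/25 - 14/75 * sig M x"
  proof -
    have "ip (nst M + 3) (vv M) (zv M None x) = (\<Sum>j<nst M + 3. 16/25 * ev (nst M + 1) j - 14/75 * (uu M j * apply_U M None (state_after M x) j))"
      unfolding ip_def by (intro sum.cong refl) (rule vvz)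
    also have "\<dots> = (\<Sum>j<nst M + 3. 16/25 * ev (nst M + 1) j) - (\<Sum>j<nst M + 3. 14/75 * (uu M j * apply_U M None (state_after M x) j))"
      by (rule sum_subtractf)
    also have "\<dots> = 16/25 * (\<Sum>j<nst M + 3. ev (nst M + 1) j) - 14/75 * sig M x"
      by (simp only: sum_distrib_left sig_def)
    also have "\<dots> = 16/25 - 14/75 * sig M x" by (simp add: ev_def)
    finally show ?thesis .
  qed
  have "acc_prob (MM M) x = (cmod (mv (nst M + 3) (hh (nst M + 3) (vv M)) (zv M None x) (nst M + 2)))\<^sup>2"
    using apply_MM_None[of x] by (simp add: acc_prob_def run_snoc r step_def Let_def pa y acc_MM)
  moreover have "mv (nst M + 3) (hh (nst M + 3) (vv M)) (zv M None x) (nst M + 2) = - (2/3 * (16/25 - 14/75 * sig M x))"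
    unfolding mv_hh ipv by (simp add: vv_def zv_def ev_def uu_ge[OF wf] apply_ge)
  ultimately show ?thesis by (simp only: norm_minus_cancel)
qed

lemma wf_MM: "wf_mmqfa (MM M)"
proof -
  have inj: "inj_on (pp M) {..<nst M + 3}"
  proof (rule inj_onI)
    fix a b assume "pp M a = pp M b"
    then have "pp M (pp M a) = pp M (pp M b)" by simp
    then show "a = b" by (simp add: pp_invol[OF wf])
  qed
  have uV: "unitary_on (nst M + 3) (VV M s)" for s
    unfolding VV_def
    by (rule unitary_perm[OF unitary_ext[OF unit_M[OF wf]] pp_lt[OF wf] inj]) simp
  have uQ: "unitary_on (nst M + 3) (hh (nst M + 3) (wv M))" by (rule unitary_hh[OF ip_wv[OF wf]])
  have uK: "unitary_on (nst M + 3) (hh (nst M + 3) (vv M))" by (rule unitary_hh[OF ip_vv[OF wf]])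
  have U: "unitary_on (nst (MM M)) (trans (MM M) s)" for s
  proof (cases s)
    case None
    have "trans (MM M) s = mm (nst M + 3) (hh (nst M + 3) (vv M)) (mm (nst M + 3) (VV M s) (hh (nst M + 3) (wv M)))"
      using None by (simp add: MM_def)
    then show ?thesis unfolding nst_MM using uK uV uQ by (simp add: unitary_mm)
  next
    case (Some a)
    have "trans (MM M) s = mm (nst M + 3) (hh (nst M + 3) (wv M)) (mm (nst M + 3) (VV M s) (hh (nst M + 3) (wv M)))"
      using Some by (simp add: MM_def)
    then show ?thesis unfolding nst_MM using uV uQ by (simp add: unitary_mm)
  qed
  have i: "init (MM M) < nst (MM M)" using cc_lt[OF wf] by (simp add: MM_def)
  have a: "acc (MM M) \<subseteq> {..<nst (MM M)}" by (simp add: MM_def)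
  have r: "rej (MM M) \<subseteq> {..<nst (MM M)}" using acc_sub[OF wf] rej_sub[OF wf] by (auto simp: MM_def)
  have d: "acc (MM M) \<inter> rej (MM M) = {}" using acc_sub[OF wf] rej_sub[OF wf] by (auto simp: MM_def)
  show ?thesis unfolding wf_mmqfa_def using U i a r d by blast
qed

end



lemma sq_sum_le:
  fixes f :: "nat \<Rightarrow> real"
  assumes "finite A" "\<And>j. j \<in> A \<Longrightarrow> 0 \<le> f j"
  shows "(\<Sum>j\<in>A. (f j)\<^sup>2) \<le> (\<Sum>j\<in>A. f j)\<^sup>2"
  using assms
proof (induction A rule: finite_induct)
  case empty
  then show ?case by simp
next
  case (insert a F)
  have h: "(\<Sum>j\<in>F. (f j)\<^sup>2) \<le> (\<Sum>j\<in>F. f j)\<^sup>2" using insert by simp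
  have p1: "0 \<le> f a" using insert by simp
  have p2: "0 \<le> (\<Sum>j\<in>F. f j)" using insert by (simp add: sum_nonneg)
  have "(f a)\<^sup>2 + (\<Sum>j\<in>F. (f j)\<^sup>2) \<le> (f a + (\<Sum>j\<in>F. f j))\<^sup>2"
    using h mult_nonneg_nonneg[OF p1 p2] by (simp add: power2_sum)
  then show ?case using insert by simp
qed

lemma cs_le:
  fixes f :: "nat \<Rightarrow> real"
  assumes "finite A" "A \<noteq> {}"
  shows "((\<Sum>j\<in>A. f j) / sqrt (real (card A)))\<^sup>2 \<le> (\<Sum>j\<in>A. (f j)\<^sup>2)"
proof -
  define k where "k = real (card A)"
  define S where "S = (\<Sum>j\<in>A. f j)"
  define m where "m = S / k"
  have kpos: "k > 0" using assms by (simp add: k_def card_gt_0_iff)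
  have e0: "0 \<le> (\<Sum>j\<in>A. (f j - m)\<^sup>2)" by (simp add: sum_nonneg)
  have e1: "(\<Sum>j\<in>A. (f j - m)\<^sup>2) = (\<Sum>j\<in>A. (f j)\<^sup>2 - 2 * m * f j + m\<^sup>2)"
    by (intro sum.cong refl) (simp add: power2_diff algebra_simps)
  have e2: "(\<Sum>j\<in>A. (f j)\<^sup>2 - 2 * m * f j + m\<^sup>2) = (\<Sum>j\<in>A. (f j)\<^sup>2) - (\<Sum>j\<in>A. 2 * m * f j) + (\<Sum>j\<in>A. m\<^sup>2)"
    by (simp add: sum.distrib sum_subtractf)
  have e3: "(\<Sum>j\<in>A. 2 * m * f j) = 2 * m * S" by (simp add: S_def sum_distrib_left)
  have e4: "(\<Sum>j\<in>A. m\<^sup>2) = k * m\<^sup>2" by (simp add: k_def)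
  have e5: "- (2 * m * S) + k * m\<^sup>2 = - S\<^sup>2 / k"
    using kpos by (simp add: m_def field_simps power2_eq_square)
  have "S\<^sup>2 / k \<le> (\<Sum>j\<in>A. (f j)\<^sup>2)" using e0 e5 unfolding e1 e2 e3 e4 by linarith
  moreover have "(S / sqrt k)\<^sup>2 = S\<^sup>2 / k" using kpos by (simp add: power_divide)
  ultimately show ?thesis by (simp add: S_def k_def)
qed

definition sv :: "'a mmqfa \<Rightarrow> 'a list \<Rightarrow> real" where
  "sv M x = (if acc M = {} then 0
           else (\<Sum>j\<in>acc M. Re (apply_U M None (state_after M x) j)) / sqrt (real (card (acc M))))"

context
  fixes M :: "'a mmqfa"
  assumes wf: "wf_mmqfa M"
begin

lemma run_M_acc0:
  assumes ed: "end_decisive M"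
  shows "fst (snd (run M (map Some w))) = 0"
proof (induction w rule: rev_induct)
  case Nil
  then show ?case by (simp add: run_def init_conf_def)
next
  case (snoc \<sigma> w)
  obtain a b c where r: "run M (map Some w) = (a, b, c)" by (cases "run M (map Some w)")
  have sa: "state_after M w = a" using r by (simp add: state_after_def)
  have "\<forall>i\<in>acc M. apply_U M (Some \<sigma>) a i = 0" using ed sa unfolding end_decisive_def by metis
  then show ?case using snoc r by (simp add: run_snoc step_def Let_def)
qed

lemma accM:
  assumes ed: "end_decisive M"
  shows "acc_prob M x = (\<Sum>i\<in>acc M. (cmod (apply_U M None (state_after M x) i))\<^sup>2)"
proof -
  obtain a b c where r: "run M (map Some x) = (a, b, c)" by (cases "run M (map Some x)")
  have sa: "state_after M x = a" using r by (simp add: state_after_def)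
  have b: "b = 0" using run_M_acc0[OF ed, of x] r by simp
  show ?thesis using r sa b by (simp add: acc_prob_def run_snoc step_def Let_def)
qed

lemma norm_sa: "(\<Sum>i<nst M. (cmod (state_after M w i))\<^sup>2) \<le> 1"
proof (induction w rule: rev_induct)
  case Nil
  have "(\<Sum>i<nst M. (cmod (ev (init M) i))\<^sup>2) = (\<Sum>i<nst M. if i = init M then 1 else 0)"
    by (intro sum.cong refl) (simp add: ev_def)
  then show ?case using init_lt[OF wf] by (simp add: state_after_Nil)
next
  case (snoc \<sigma> w)
  have "(\<Sum>i<nst M. (cmod (state_after M (w @ [\<sigma>]) i))\<^sup>2) \<le> (\<Sum>i<nst M. (cmod (apply_U M (Some \<sigma>) (state_after M w) i))\<^sup>2)"
    by (intro sum_mono) (simp add: state_after_snoc)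
  also have "\<dots> = (\<Sum>i<nst M. (cmod (state_after M w i))\<^sup>2)"
    unfolding apply_U_mv by (rule unitary_norm[OF unit_M[OF wf]])
  finally show ?case using snoc by simp
qed

lemma norm_alpha: "(\<Sum>i<nst M. (cmod (apply_U M s (state_after M w) i))\<^sup>2) \<le> 1"
  unfolding apply_U_mv unitary_norm[OF unit_M[OF wf]] by (rule norm_sa)

lemma sig_sv:
  assumes pa: "positive_amplitude M"
  shows "sig M x = complex_of_real (sv M x)"
proof (cases "acc M = {}")
  case True
  have "sig M x = (\<Sum>j<nst M + 3. if j = nst M then apply_U M None (state_after M x) j else 0)"
    unfolding sig_def using True by (intro sum.cong refl) (simp add: uu_def ev_def)
  also have "\<dots> = 0" by (simp add: apply_ge)
  finally show ?thesis using True by (simp add: sv_def)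
next
  case False
  let ?a = "apply_U M None (state_after M x)"
  define r where "r = 1 / sqrt (real (card (acc M)))"
  have re: "\<And>j. j \<in> acc M \<Longrightarrow> ?a j = complex_of_real (Re (?a j))"
    using pa unfolding positive_amplitude_def by (simp add: complex_eq_iff)
  have "sig M x = (\<Sum>j<nst M + 3. if j \<in> acc M then complex_of_real r * ?a j else 0)"
    unfolding sig_def using False by (intro sum.cong refl) (simp add: uu_def r_def)
  also have "\<dots> = (\<Sum>j\<in>acc M. complex_of_real r * ?a j)"
    by (rule sum.mono_neutral_cong_right) (use acc_sub[OF wf] in auto)
  also have "\<dots> = (\<Sum>j\<in>acc M. complex_of_real (r * Re (?a j)))"
    by (intro sum.cong refl) (subst re, auto)
  also have "\<dots> = complex_of_real (sv M x)"
    using False by (simp add: sv_def r_def sum_distrib_left[symmetric] divide_inverse mult.commute)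
  finally show ?thesis .
qed

lemma accMM_sv:
  assumes pa: "positive_amplitude M"
  shows "acc_prob (MM M) x = (2/3 * (16/25 - 14/75 * sv M x))\<^sup>2"
proof -
  have "2/3 * (16/25 - 14/75 * sig M x) = complex_of_real (2/3 * (16/25 - 14/75 * sv M x))"
    using sig_sv[OF pa] by simp
  then show ?thesis using accMM[OF wf, of x] by (simp only: norm_of_real power2_abs)
qed

lemma sv_props:
  assumes pa: "positive_amplitude M" and ed: "end_decisive M"
  shows "0 \<le> sv M x" "sv M x \<le> 1" "(sv M x)\<^sup>2 \<le> acc_prob M x"
    "acc M \<noteq> {} \<Longrightarrow> acc_prob M x \<le> ((\<Sum>j\<in>acc M. Re (apply_U M None (state_after M x) j)))\<^sup>2"
    "acc_prob M x = 0 \<Longrightarrow> sv M x = 0"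
proof -
  let ?a = "apply_U M None (state_after M x)"
  have fin: "finite (acc M)" using acc_sub[OF wf] finite_subset by blast
  have im: "\<And>j. j \<in> acc M \<Longrightarrow> Im (?a j) = 0" and nn: "\<And>j. j \<in> acc M \<Longrightarrow> Re (?a j) \<ge> 0"
    using pa unfolding positive_amplitude_def by auto
  have pM: "acc_prob M x = (\<Sum>j\<in>acc M. (Re (?a j))\<^sup>2)"
    unfolding accM[OF ed] by (intro sum.cong refl) (simp add: cmod_eq_Re im)
  have T1: "acc_prob M x \<le> 1"
  proof -
    have "acc_prob M x \<le> (\<Sum>i<nst M. (cmod (?a i))\<^sup>2)"
      unfolding accM[OF ed] using acc_sub[OF wf] by (intro sum_mono2) auto
    then show ?thesis using norm_alpha[of None x] by simp
  qed
  show s0: "0 \<le> sv M x" unfolding sv_def using nn by (simp add: sum_nonneg)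
  show s2: "(sv M x)\<^sup>2 \<le> acc_prob M x"
  proof (cases "acc M = {}")
    case True then show ?thesis by (simp add: sv_def pM)
  next
    case False
    have "(sv M x)\<^sup>2 = ((\<Sum>j\<in>acc M. Re (?a j)) / sqrt (real (card (acc M))))\<^sup>2"
      using False by (simp add: sv_def)
    also have "\<dots> \<le> (\<Sum>j\<in>acc M. (Re (?a j))\<^sup>2)" by (rule cs_le[OF fin False])
    finally show ?thesis unfolding pM .
  qed
  show "sv M x \<le> 1"
  proof (rule ccontr)
    assume "\<not> sv M x \<le> 1"
    then have g: "1 < sv M x" by simp
    have "1 * 1 < sv M x * sv M x" by (rule mult_strict_mono[OF g g]) (use g in simp_all)
    then show False using s2 T1 by (simp add: power2_eq_square)
  qed
  show "acc M \<noteq> {} \<Longrightarrow> acc_prob M x \<le> ((\<Sum>j\<in>acc M. Re (?a j)))\<^sup>2"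
    unfolding pM by (rule sq_sum_le[OF fin nn])
  show "acc_prob M x = 0 \<Longrightarrow> sv M x = 0"
  proof -
    assume "acc_prob M x = 0"
    then have "(\<Sum>j\<in>acc M. (Re (?a j))\<^sup>2) = 0" using pM by simp
    then have "\<forall>j\<in>acc M. (Re (?a j))\<^sup>2 = 0" using fin by (subst (asm) sum_nonneg_eq_0_iff) auto
    then have "(\<Sum>j\<in>acc M. Re (?a j)) = 0" by simp
    then show "sv M x = 0" by (simp add: sv_def)
  qed
qed

end


lemma g_mono:
  fixes a b :: real
  assumes "0 \<le> a" "a < b" "b \<le> 1"
  shows "(2/3 * (16/25 - 14/75 * b))\<^sup>2 < (2/3 * (16/25 - 14/75 * a))\<^sup>2"
proof -
  have nn: "0 \<le> 2/3 * (16/25 - 14/75 * b)" using assms by simp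
  have lt: "2/3 * (16/25 - 14/75 * b) < 2/3 * (16/25 - 14/75 * a)" using assms by simp
  show ?thesis by (rule power_strict_mono[OF lt nn]) simp
qed

theorem lemma4p13:
  fixes M :: "'a::finite mmqfa" and L :: "'a list set"
  assumes "wf_mmqfa M" and "end_decisive M" and "positive_amplitude M"
    and "accepts_pos_one_sided M L"
  shows "\<exists>M' :: 'a mmqfa. wf_mmqfa M' \<and> end_decisive M' \<and> accepts_bounded M' (UNIV - L)"
proof -
  note wf = assms(1) and ed = assms(2) and pa = assms(3)
  obtain c0 where c0: "c0 > 0" and hc: "\<And>x. (x \<in> L \<longrightarrow> acc_prob M x > c0) \<and> (x \<notin> L \<longrightarrow> acc_prob M x = 0)"
    using assms(4) unfolding accepts_pos_one_sided_def by blast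
  define g :: "real \<Rightarrow> real" where "g s = (2/3 * (16/25 - 14/75 * s))\<^sup>2" for s
  have pMM: "acc_prob (MM M) x = g (sv M x)" for x
    unfolding g_def by (rule accMM_sv[OF wf pa])
  define m where "m = (if acc M = {} then 1 else min (sqrt c0 / sqrt (real (card (acc M)))) 1)"
  have fin: "finite (acc M)" using acc_sub[OF wf] finite_subset by blast
  have m0: "0 < m" using c0 fin by (auto simp: m_def card_gt_0_iff)
  have m1: "m \<le> 1" by (simp add: m_def)
  have inL: "g (sv M x) < g m" if x: "x \<in> L" for x
  proof -
    have pc: "acc_prob M x > c0" using hc x by blast
    have ne: "acc M \<noteq> {}"
    proof
      assume "acc M = {}"
      then have "acc_prob M x = 0" by (simp add: accM[OF wf ed])
      then show False using pc c0 by simp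
    qed
    define S where "S = (\<Sum>j\<in>acc M. Re (apply_U M None (state_after M x) j))"
    have S0: "0 \<le> S" using pa unfolding S_def positive_amplitude_def by (simp add: sum_nonneg)
    have "c0 < S\<^sup>2" using sv_props(4)[OF wf pa ed ne, of x] pc unfolding S_def by simp
    then have "sqrt c0 < sqrt (S\<^sup>2)" by (rule real_sqrt_less_mono)
    then have "sqrt c0 < S" using S0 by simp
    then have "sqrt c0 / sqrt (real (card (acc M))) < S / sqrt (real (card (acc M)))"
      using ne fin by (intro divide_strict_right_mono) (auto simp: card_gt_0_iff)
    moreover have svx: "sv M x = S / sqrt (real (card (acc M)))" unfolding sv_def S_def using ne by simp
    ultimately have "m < sv M x" using ne by (simp add: m_def)
    then show ?thesis unfolding g_def using g_mono m0 sv_props(2)[OF wf pa ed, of x] by simp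
  qed
  have notL: "g (sv M x) = g 0" if x: "x \<notin> L" for x
    using sv_props(5)[OF wf pa ed, of x] hc x by simp
  have gm: "g m < g 0" unfolding g_def using g_mono[of 0 m] m0 m1 by simp
  have "accepts_bounded (MM M) (UNIV - L)"
    unfolding accepts_bounded_def
  proof (intro exI conjI allI)
    show "(g 0 - g m) / 4 > 0" using gm by simp
    fix x
    show "x \<in> UNIV - L \<longrightarrow> acc_prob (MM M) x > (g 0 + g m) / 2 + (g 0 - g m) / 4"
    proof
      assume "x \<in> UNIV - L"
      then have "acc_prob (MM M) x = g 0" using notL pMM by simp
      then show "acc_prob (MM M) x > (g 0 + g m) / 2 + (g 0 - g m) / 4" using gm by (simp add: field_simps)
    qed
    show "x \<notin> UNIV - L \<longrightarrow> acc_prob (MM M) x < (g 0 + g m) / 2 - (g 0 - g m) / 4"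
    proof
      assume "x \<notin> UNIV - L"
      then have "acc_prob (MM M) x < g m" using inL pMM by simp
      then show "acc_prob (MM M) x < (g 0 + g m) / 2 - (g 0 - g m) / 4" using gm by (simp add: field_simps)
    qed
  qed
  then show ?thesis using wf_MM[OF wf] end_dec_MM[OF wf] by blast
qed


end
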